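(* Let $n,N\in\mathbb N$, $\mathcal G=(\mathbb H^n)^N$, let $d\in C^\infty(\mathcal G\setminus\{0\})$ be a homogeneous norm on $\mathcal G$, and fix $p\ge2$, $\theta\in\mathbb R$. Define \[ Z_d=\frac{n+1}{n}\,\frac{z}{d}-\frac{p\theta}{2n}\,\frac{1}{d^2}\sum_{j=1}^Nt_j\,\nabla^{(j)\perp}d . \] Then for all $u\in C_c^\infty(\mathcal G\setminus\{0\})$, \[ \int_{\mathcal G}\frac{|u|^{p-2}u\,\mathcal Eu}{d^{p\theta}}\,dz\,dt=\int_{\mathcal G}\frac{|u|^{p-2}u}{d^{p\theta-1}}\,\langle\nabla_{\mathcal G}u,Z_d\rangle\,dz\,dt . \]
   Context: $\mathcal G=(\mathbb H^n)^N$ is $\mathbb R^{2nN}\times\mathbb R^N$ with coordinates $z=(z^{(1)},\dots,z^{(N)})$, $z^{(j)}\in\mathbb R^{2n}$, $t=(t_1,\dots,t_N)$; group law $(z,t)\circ(\eta,\tau)=(z+\eta,t+\tau+\tfrac12(\langle B_{\mathbb H}z^{(1)},\eta^{(1)}\rangle,\dots,\langle B_{\mathbb H}z^{(N)},\eta^{(N)}\rangle))$ with $B_{\mathbb H}=\mathrm{diag}\left(\begin{pmatrix}0&4\\-4&0\end{pmatrix},\dots\right)\in\mathbb R^{2n\times2n}$; dilations $\delta_\gamma(z,t)=(\gamma z,\gamma^2t)$; homogeneous dimension $Q=2N(n+1)$. Horizontal fields $X^{(j)}_{2i-1}=\partial_{z^{(j)}_{2i-1}}+2z^{(j)}_{2i}\partial_{t_j}$,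 $X^{(j)}_{2i}=\partial_{z^{(j)}_{2i}}-2z^{(j)}_{2i-1}\partial_{t_j}$; $\nabla_{\mathcal G}$ is the vector of all of them, and horizontal vector fields are identified with $\mathbb R^{2nN}$-valued functions via this basis. $\nabla^{(j)\perp}d$ is the horizontal field with components $(-X^{(j)}_2d,X^{(j)}_1d,\dots,-X^{(j)}_{2n}d,X^{(j)}_{2n-1}d)$ in the $j$-th block and zero elsewhere. $\mathcal E=\sum_{j}\big(\sum_{k=1}^{2n}z^{(j)}_k\partial_{z^{(j)}_k}+2t_j\partial_{t_j}\big)$. A homogeneous norm is a continuous $d\ge0$ with $d(\delta_\lambda(z,t))=\lambda d(z,t)$, $d>0$ off the origin, and $d((z,t)\circ(\eta,\tau))\le d(z,t)+d(\eta,\tau)$. *)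

theory Defs
  imports "HOL-Analysis.Analysis"
begin

text \<open>Points of G = (H^n)^N are pairs (z,t) with z :: real^2^'n^'N (z $ j $ i $ 1 is
  z^(j)_(2i-1), z $ j $ i $ 2 is z^(j)_(2i)) and t :: real^'N. Thus n = CARD('n), N = CARD('N).\<close>

type_synonym ('n,'N) heis = "(real^2^'n^'N) \<times> (real^'N)"

fun Ck_on :: "nat \<Rightarrow> 'a::euclidean_space set \<Rightarrow> ('a \<Rightarrow> real) \<Rightarrow> bool" where
  "Ck_on 0 S f = continuous_on S f"
| "Ck_on (Suc k) S f = (continuous_on S f \<and> (\<forall>x\<in>S. f differentiable (at x)) \<and>
      (\<forall>v. Ck_on k S (\<lambda>x. frechet_derivative f (at x) v)))"

definition smooth_on :: "'a::euclidean_space set \<Rightarrow> ('a \<Rightarrow> real) \<Rightarrow> bool" where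
  "smooth_on S f = (\<forall>k. Ck_on k S f)"

text \<open>Group law: (z,t)o(eta,tau) = (z+eta, t+tau+1/2(<B z^(j), eta^(j)>)_j) with
  B = diag([[0,4],[-4,0]],...), so 1/2<B z^(j),eta^(j)> = 2 sum_i (z_{2i} eta_{2i-1} - z_{2i-1} eta_{2i}).\<close>
definition heis_mult :: "('n::finite,'N::finite) heis \<Rightarrow> ('n,'N) heis \<Rightarrow> ('n,'N) heis" where
  "heis_mult x y = (fst x + fst y,
     snd x + snd y + (\<chi> j. (1/2) * (\<Sum>i\<in>UNIV.
        4 * (fst x $ j $ i $ 2) * (fst y $ j $ i $ 1) - 4 * (fst x $ j $ i $ 1) * (fst y $ j $ i $ 2))))"

definition heis_dil :: "real \<Rightarrow> ('n::finite,'N::finite) heis \<Rightarrow> ('n,'N) heis" where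
  "heis_dil \<gamma> x = (\<gamma> *\<^sub>R fst x, \<gamma>\<^sup>2 *\<^sub>R snd x)"

definition homogeneous_norm :: "(('n::finite,'N::finite) heis \<Rightarrow> real) \<Rightarrow> bool" where
  "homogeneous_norm d \<longleftrightarrow> continuous_on UNIV d \<and> (\<forall>x. d x \<ge> 0)
     \<and> (\<forall>c>0. \<forall>x. d (heis_dil c x) = c * d x)
     \<and> (\<forall>x. x \<noteq> 0 \<longrightarrow> d x > 0)
     \<and> (\<forall>x y. d (heis_mult x y) \<le> d x + d y)"

text \<open>Horizontal vector fields: hfield j i 1 = X^(j)_(2i-1) = d/dz^(j)_(2i-1) + 2 z^(j)_(2i) d/dt_j,
  hfield j i 2 = X^(j)_(2i) = d/dz^(j)_(2i) - 2 z^(j)_(2i-1) d/dt_j, as vectors at the point x.\<close>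
definition hfield :: "'N \<Rightarrow> 'n \<Rightarrow> 2 \<Rightarrow> ('n::finite,'N::finite) heis \<Rightarrow> ('n,'N) heis" where
  "hfield j i k x =
     ((\<chi> j' i' k'. if j' = j \<and> i' = i \<and> k' = k then 1 else 0),
      (\<chi> j'. if j' = j then (if k = 1 then 2 * (fst x $ j $ i $ 2) else - 2 * (fst x $ j $ i $ 1)) else 0))"

definition hgrad :: "(('n::finite,'N::finite) heis \<Rightarrow> real) \<Rightarrow> ('n,'N) heis \<Rightarrow> real^2^'n^'N" where
  "hgrad f x = (\<chi> j i k. frechet_derivative f (at x) (hfield j i k x))"

definition hperp :: "'N \<Rightarrow> (('n::finite,'N::finite) heis \<Rightarrow> real) \<Rightarrow> ('n,'N) heis \<Rightarrow> real^2^'n^'N" where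
  "hperp j f x = (\<chi> j' i k. if j' = j then (if k = 1 then - (hgrad f x $ j $ i $ 2)
                                             else hgrad f x $ j $ i $ 1) else 0)"

definition euler_op :: "(('n::finite,'N::finite) heis \<Rightarrow> real) \<Rightarrow> ('n,'N) heis \<Rightarrow> real" where
  "euler_op u x = frechet_derivative u (at x) (fst x, 2 *\<^sub>R snd x)"

definition Zd :: "real \<Rightarrow> real \<Rightarrow> (('n::finite,'N::finite) heis \<Rightarrow> real) \<Rightarrow> ('n,'N) heis \<Rightarrow> real^2^'n^'N" where
  "Zd p \<theta> d x =
     ((real CARD('n) + 1) / real CARD('n) / d x) *\<^sub>R fst x
     - (p * \<theta> / (2 * real CARD('n)) / (d x)\<^sup>2) *\<^sub>R (\<Sum>j\<in>UNIV. (snd x $ j) *\<^sub>R hperp j d x)"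

end

theory Submission
  imports Defs
begin

lemma dir_deriv:
  fixes f :: "'a::real_normed_vector \<Rightarrow> real"
  assumes "(f has_derivative f') (at (c + t *\<^sub>R v))"
  shows "((\<lambda>t. f (c + t *\<^sub>R v)) has_real_derivative f' v) (at t)"
proof -
  have l: "bounded_linear f'" using assms has_derivative_bounded_linear by blast
  have "((\<lambda>t. f (c + t *\<^sub>R v)) has_derivative (\<lambda>r. f' (r *\<^sub>R v))) (at t)"
    using assms by (auto intro!: derivative_eq_intros has_derivative_compose[of "\<lambda>t. c + t *\<^sub>R v" _ _ _ f])
  moreover have "(\<lambda>r. f' (r *\<^sub>R v)) = (\<lambda>r. f' v * r)"
    using l by (simp add: linear_simps mult.commute)
  ultimately show ?thesis by (simp add: has_field_derivative_def)
qed

lemma mixed_mvt: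
  fixes f :: "'a::real_normed_vector \<Rightarrow> real"
  assumes s: "0 < s" and sub: "cball x (s * (norm a + norm b)) \<subseteq> S"
   and df: "\<And>y. y \<in> S \<Longrightarrow> (f has_derivative f' y) (at y)"
   and da: "\<And>y. y \<in> S \<Longrightarrow> ((\<lambda>y. f' y a) has_derivative fa y) (at y)"
  shows "\<exists>\<xi> \<eta>. 0 < \<xi> \<and> \<xi> < s \<and> 0 < \<eta> \<and> \<eta> < s \<and>
     f (x + s *\<^sub>R a + s *\<^sub>R b) - f (x + s *\<^sub>R a) - f (x + s *\<^sub>R b) + f x
       = s * s * fa (x + \<xi> *\<^sub>R a + \<eta> *\<^sub>R b) b"
proof -
  have inS: "x + \<tau> *\<^sub>R a + \<sigma> *\<^sub>R b \<in> S" if "0 \<le> \<tau>" "\<tau> \<le> s" "0 \<le> \<sigma>" "\<sigma> \<le> s" for \<tau> \<sigma>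
  proof -
    have "norm (\<tau> *\<^sub>R a + \<sigma> *\<^sub>R b) \<le> \<tau> * norm a + \<sigma> * norm b"
      using that by (metis (no_types, lifting) abs_of_nonneg norm_scaleR norm_triangle_ineq)
    also have "\<dots> \<le> s * norm a + s * norm b" using that by (intro add_mono mult_right_mono) auto
    moreover have "dist x (x + \<tau> *\<^sub>R a + \<sigma> *\<^sub>R b) = norm (\<tau> *\<^sub>R a + \<sigma> *\<^sub>R b)"
      by (metis add.assoc add_diff_cancel_left' dist_commute dist_norm)
    ultimately have "dist x (x + \<tau> *\<^sub>R a + \<sigma> *\<^sub>R b) \<le> s * (norm a + norm b)"
      by (simp add: algebra_simps)
    then show ?thesis using sub by auto
  qed
  define \<phi> where "\<phi> \<tau> = f ((x + s *\<^sub>R b) + \<tau> *\<^sub>R a) - f (x + \<tau> *\<^sub>R a)" for \<tau>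
  have "\<phi> s - \<phi> 0 = f (x + s *\<^sub>R a + s *\<^sub>R b) - f (x + s *\<^sub>R a) - f (x + s *\<^sub>R b) + f x"
    unfolding \<phi>_def by (simp add: algebra_simps)
  moreover obtain \<xi> where \<xi>: "0 < \<xi>" "\<xi> < s"
    and e1: "\<phi> s - \<phi> 0 = (s - 0) * (f' ((x + s *\<^sub>R b) + \<xi> *\<^sub>R a) a - f' (x + \<xi> *\<^sub>R a) a)"
  proof -
    have "DERIV \<phi> \<tau> :> f' ((x + s *\<^sub>R b) + \<tau> *\<^sub>R a) a - f' (x + \<tau> *\<^sub>R a) a"
      if "0 \<le> \<tau>" "\<tau> \<le> s" for \<tau>
      unfolding \<phi>_def using inS[of \<tau> s] inS[of \<tau> 0] that s
      by (intro DERIV_diff dir_deriv df) (auto simp: algebra_simps)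
    from MVT2[OF s this] show ?thesis using that by auto
  qed
  moreover obtain \<eta> where \<eta>: "0 < \<eta>" "\<eta> < s"
    and e2: "f' ((x + \<xi> *\<^sub>R a) + s *\<^sub>R b) a - f' ((x + \<xi> *\<^sub>R a) + 0 *\<^sub>R b) a
       = (s - 0) * fa ((x + \<xi> *\<^sub>R a) + \<eta> *\<^sub>R b) b"
  proof -
    have "DERIV (\<lambda>\<sigma>. f' ((x + \<xi> *\<^sub>R a) + \<sigma> *\<^sub>R b) a) \<sigma> :> fa ((x + \<xi> *\<^sub>R a) + \<sigma> *\<^sub>R b) b"
      if "0 \<le> \<sigma>" "\<sigma> \<le> s" for \<sigma>
      using inS[of \<xi> \<sigma>] that \<xi> by (intro dir_deriv[where f="\<lambda>y. f' y a"] da) auto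
    from MVT2[OF s this] show ?thesis using that by auto
  qed
  ultimately show ?thesis using \<xi> \<eta>
    by (intro exI[of _ \<xi>] exI[of _ \<eta>]) (auto simp: algebra_simps)
qed

lemma clairaut:
  fixes f :: "'a::real_normed_vector \<Rightarrow> real"
  assumes S: "open S" "x \<in> S"
   and df: "\<And>y. y \<in> S \<Longrightarrow> (f has_derivative f' y) (at y)"
   and da: "\<And>y. y \<in> S \<Longrightarrow> ((\<lambda>y. f' y a) has_derivative fa y) (at y)"
   and db: "\<And>y. y \<in> S \<Longrightarrow> ((\<lambda>y. f' y b) has_derivative fb y) (at y)"
   and ca: "continuous (at x) (\<lambda>y. fa y b)" and cb: "continuous (at x) (\<lambda>y. fb y a)"
  shows "fa x b = fb x a"
proof (rule ccontr)
  assume ne: "fa x b \<noteq> fb x a"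
  define \<epsilon> where "\<epsilon> = \<bar>fa x b - fb x a\<bar> / 2"
  have \<epsilon>: "\<epsilon> > 0" using ne unfolding \<epsilon>_def by auto
  obtain d1 where d1: "d1 > 0" "\<And>y. dist y x < d1 \<Longrightarrow> dist (fa y b) (fa x b) < \<epsilon>"
    using ca \<epsilon> unfolding continuous_at_eps_delta by blast
  obtain d2 where d2: "d2 > 0" "\<And>y. dist y x < d2 \<Longrightarrow> dist (fb y a) (fb x a) < \<epsilon>"
    using cb \<epsilon> unfolding continuous_at_eps_delta by blast
  obtain r where r: "r > 0" "ball x r \<subseteq> S" using S openE by blast
  define m where "m = min r (min d1 d2)"
  have m: "m > 0" "m \<le> r" "m \<le> d1" "m \<le> d2" using r d1 d2 unfolding m_def by auto
  define s where "s = m / (2 * (norm a + norm b + 1))"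
  have np: "0 < 2 * (norm a + norm b + 1)" by (smt (verit) norm_ge_zero)
  have sp: "s > 0" using m np unfolding s_def by (intro divide_pos_pos) auto
  have sm: "s * (norm a + norm b) < m"
  proof -
    have "s * (norm a + norm b) \<le> s * (norm a + norm b + 1)" using sp by simp
    also have "\<dots> = m / 2" unfolding s_def using np by (auto simp: field_simps)
    finally show ?thesis using m by simp
  qed
  have sub1: "cball x (s * (norm a + norm b)) \<subseteq> S" using sm m r by (auto simp: subset_iff)
  have sub2: "cball x (s * (norm b + norm a)) \<subseteq> S" using sub1 by (simp add: add.commute)
  obtain \<xi> \<eta> where "0 < \<xi>" "\<xi> < s" "0 < \<eta>" "\<eta> < s" and e1:
     "f (x + s *\<^sub>R a + s *\<^sub>R b) - f (x + s *\<^sub>R a) - f (x + s *\<^sub>R b) + f x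
       = s * s * fa (x + \<xi> *\<^sub>R a + \<eta> *\<^sub>R b) b"
    using mixed_mvt[OF sp sub1 df da] by blast
  obtain \<xi>' \<eta>' where "0 < \<xi>'" "\<xi>' < s" "0 < \<eta>'" "\<eta>' < s" and e2:
     "f (x + s *\<^sub>R b + s *\<^sub>R a) - f (x + s *\<^sub>R b) - f (x + s *\<^sub>R a) + f x
       = s * s * fb (x + \<xi>' *\<^sub>R b + \<eta>' *\<^sub>R a) a"
    using mixed_mvt[OF sp sub2 df db] by blast
  have "x + s *\<^sub>R b + s *\<^sub>R a = x + s *\<^sub>R a + s *\<^sub>R b" by (simp add: algebra_simps)
  then have "s * s * fa (x + \<xi> *\<^sub>R a + \<eta> *\<^sub>R b) b = s * s * fb (x + \<xi>' *\<^sub>R b + \<eta>' *\<^sub>R a) a"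
    using e1 e2 by (metis add_diff_eq diff_add_eq diff_diff_eq2 diff_diff_eq)
  then have eq: "fa (x + \<xi> *\<^sub>R a + \<eta> *\<^sub>R b) b = fb (x + \<xi>' *\<^sub>R b + \<eta>' *\<^sub>R a) a"
    using sp by simp
  have near: "dist (x + \<tau> *\<^sub>R a + \<sigma> *\<^sub>R b) x < m" if "0 < \<tau>" "\<tau> < s" "0 < \<sigma>" "\<sigma> < s" for \<tau> \<sigma>
  proof -
    have "norm (\<tau> *\<^sub>R a + \<sigma> *\<^sub>R b) \<le> \<tau> * norm a + \<sigma> * norm b"
      using that by (metis (no_types, lifting) abs_of_nonneg less_imp_le norm_scaleR norm_triangle_ineq)
    also have "\<dots> \<le> s * norm a + s * norm b" using that by (intro add_mono mult_right_mono) auto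
    finally show ?thesis using sm by (simp add: dist_norm algebra_simps)
  qed
  have "dist (fa (x + \<xi> *\<^sub>R a + \<eta> *\<^sub>R b) b) (fa x b) < \<epsilon>"
    using d1(2) near[OF \<open>0 < \<xi>\<close> \<open>\<xi> < s\<close> \<open>0 < \<eta>\<close> \<open>\<eta> < s\<close>] m by force
  moreover have "dist (fb (x + \<xi>' *\<^sub>R b + \<eta>' *\<^sub>R a) a) (fb x a) < \<epsilon>"
  proof -
    have "x + \<xi>' *\<^sub>R b + \<eta>' *\<^sub>R a = x + \<eta>' *\<^sub>R a + \<xi>' *\<^sub>R b" by (simp add: algebra_simps)
    then have "dist (x + \<xi>' *\<^sub>R b + \<eta>' *\<^sub>R a) x < m"
      using near[OF \<open>0 < \<eta>'\<close> \<open>\<eta>' < s\<close> \<open>0 < \<xi>'\<close> \<open>\<xi>' < s\<close>] by metis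
    then show ?thesis using d2(2) m by force
  qed
  moreover have "\<And>A B p q::real. \<bar>A - p\<bar> < \<bar>p - q\<bar>/2 \<Longrightarrow> \<bar>B - q\<bar> < \<bar>p - q\<bar>/2 \<Longrightarrow> A = B \<Longrightarrow> False"
    by (auto simp: abs_if split: if_split_asm)
  ultimately show False using eq unfolding \<epsilon>_def dist_real_def by blast
qed


definition C1 :: "'a::real_normed_vector set \<Rightarrow> ('a \<Rightarrow> real) \<Rightarrow> ('a \<Rightarrow> 'a \<Rightarrow> real) \<Rightarrow> bool" where
  "C1 S f f' \<longleftrightarrow> (\<forall>x\<in>S. (f has_derivative f' x) (at x)) \<and> (\<forall>v. continuous_on S (\<lambda>x. f' x v))"

lemma C1_cont: "C1 S f f' \<Longrightarrow> continuous_on S f"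
  unfolding C1_def by (meson continuous_at_imp_continuous_on has_derivative_continuous)

lemma C1_const: "C1 S (\<lambda>x. c) (\<lambda>x v. 0)"
  unfolding C1_def by auto

lemma C1_lin: "bounded_linear l \<Longrightarrow> C1 S l (\<lambda>x. l)"
  unfolding C1_def by (auto intro: bounded_linear_imp_has_derivative)

lemma C1_add: "C1 S f f' \<Longrightarrow> C1 S g g' \<Longrightarrow> C1 S (\<lambda>x. f x + g x) (\<lambda>x v. f' x v + g' x v)"
  unfolding C1_def by (auto intro!: has_derivative_add continuous_intros)

lemma C1_diff: "C1 S f f' \<Longrightarrow> C1 S g g' \<Longrightarrow> C1 S (\<lambda>x. f x - g x) (\<lambda>x v. f' x v - g' x v)"
  unfolding C1_def by (auto intro!: has_derivative_diff continuous_intros)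

lemma C1_mult: "C1 S f f' \<Longrightarrow> C1 S g g' \<Longrightarrow> C1 S (\<lambda>x. f x * g x) (\<lambda>x v. f x * g' x v + f' x v * g x)"
proof -
  assume a: "C1 S f f'" "C1 S g g'"
  have cf: "continuous_on S f" "continuous_on S g" using a C1_cont by auto
  show ?thesis using a cf unfolding C1_def by (auto intro!: has_derivative_mult continuous_intros)
qed

lemma C1_cmult: "C1 S f f' \<Longrightarrow> C1 S (\<lambda>x. c * f x) (\<lambda>x v. c * f' x v)"
  using C1_mult[OF C1_const[of S c]] by simp

lemma C1_comp:
  assumes "C1 S f f'" "\<And>x. x \<in> S \<Longrightarrow> (\<phi> has_real_derivative \<phi>' (f x)) (at (f x))"
    "continuous_on (f ` S) \<phi>'"
  shows "C1 S (\<lambda>x. \<phi> (f x)) (\<lambda>x v. \<phi>' (f x) * f' x v)"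
proof -
  have "((\<lambda>x. \<phi> (f x)) has_derivative (\<lambda>v. \<phi>' (f x) * f' x v)) (at x)" if "x \<in> S" for x
    using has_derivative_compose[of f "f' x" x UNIV \<phi> "(*) (\<phi>' (f x))"] assms(1,2) that
    unfolding C1_def has_field_derivative_def by auto
  moreover have "continuous_on S (\<lambda>x. \<phi>' (f x))"
    using assms(3) C1_cont[OF assms(1)] by (intro continuous_on_compose2[OF assms(3)]) auto
  ultimately show ?thesis using assms(1) unfolding C1_def by (auto intro!: continuous_intros)
qed

lemma powr_plus1: "0 < (a::real) \<Longrightarrow> a powr (q + 1) = a powr q * a"
  by (simp add: powr_add)

lemma psi_deriv:
  fixes p s :: real
  assumes p: "p \<ge> 2"
  shows "((\<lambda>s. \<bar>s\<bar> powr p / p) has_real_derivative (\<bar>s\<bar> powr (p - 2) * s)) (at s)"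
proof (cases "s = 0")
  case True
  have "((\<lambda>h. (\<bar>0 + h\<bar> powr p / p - \<bar>0\<bar> powr p / p) / h) \<longlongrightarrow> 0) (at 0)"
  proof (rule Lim_null_comparison)
    show "\<forall>\<^sub>F h in at 0. norm ((\<bar>0 + h\<bar> powr p / p - \<bar>0\<bar> powr p / p) / h) \<le> \<bar>h\<bar> powr (p - 1) / p"
    proof (rule eventually_mono[OF eventually_neq_at_within[where x=0]])
      fix h :: real assume "h \<noteq> 0"
      then have "\<bar>h\<bar> powr p = \<bar>h\<bar> powr (p - 1) * \<bar>h\<bar>"
        using powr_plus1[of "\<bar>h\<bar>" "p - 1"] by simp
      then show "norm ((\<bar>0 + h\<bar> powr p / p - \<bar>0\<bar> powr p / p) / h) \<le> \<bar>h\<bar> powr (p - 1) / p"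
        using p \<open>h \<noteq> 0\<close> by (simp add: abs_mult abs_divide)
    qed
    have "((\<lambda>h. \<bar>h\<bar> powr (p - 1)) \<longlongrightarrow> 0) (at (0::real))"
      using p by (intro tendsto_zero_powrI tendsto_rabs_zero tendsto_ident_at) auto
    then show "((\<lambda>h. \<bar>h\<bar> powr (p - 1) / p) \<longlongrightarrow> 0) (at 0)"
      using tendsto_divide_zero by blast
  qed
  then show ?thesis using True by (simp add: DERIV_def)
next
  case False
  show ?thesis
  proof (cases "s > 0")
    case True
    have ev: "\<forall>\<^sub>F y in nhds s. \<bar>y\<bar> powr p / p = y powr p / p"
      using eventually_nhds_in_open[of "{0<..}" s] True
      by (simp add: eventually_mono)
    have "((\<lambda>y. y powr p / p) has_real_derivative (p * s powr (p - 1) / p)) (at s)"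
      using True by (auto intro!: derivative_eq_intros)
    moreover have "p * s powr (p - 1) / p = \<bar>s\<bar> powr (p - 2) * s"
      using True p powr_plus1[of s "p - 2"] by (simp add: algebra_simps)
    ultimately show ?thesis using DERIV_cong_ev[OF refl ev refl] by simp
  next
    case False2: False
    then have neg: "s < 0" using False by auto
    have ev: "\<forall>\<^sub>F y in nhds s. \<bar>y\<bar> powr p / p = (- y) powr p / p"
      using eventually_nhds_in_open[of "{..<0}" s] neg
      by (simp add: eventually_mono)
    have "((\<lambda>y. (- y) powr p / p) has_real_derivative (p * (- s) powr (p - 1) * (- 1) / p)) (at s)"
      using neg by (auto intro!: derivative_eq_intros)
    moreover have "p * (- s) powr (p - 1) * (- 1) / p = \<bar>s\<bar> powr (p - 2) * s"
    proof -
      have "(- s) powr (p - 1) = (- s) powr (p - 2) * (- s)"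
        using neg powr_plus1[of "-s" "p - 2"] by (simp add: algebra_simps)
      then show ?thesis using neg p by simp
    qed
    ultimately show ?thesis using DERIV_cong_ev[OF refl ev refl] by simp
  qed
qed

lemma phi_cont:
  fixes p :: real
  assumes p: "p \<ge> 2"
  shows "continuous_on UNIV (\<lambda>s::real. \<bar>s\<bar> powr (p - 2) * s)"
proof -
  have "isCont (\<lambda>s::real. \<bar>s\<bar> powr (p - 2) * s) s" for s
  proof (cases "s = 0")
    case True
    have "((\<lambda>s::real. \<bar>s\<bar> powr (p - 2) * s) \<longlongrightarrow> 0) (at 0)"
    proof (rule Lim_null_comparison)
      show "\<forall>\<^sub>F y in at 0. norm (\<bar>y::real\<bar> powr (p - 2) * y) \<le> \<bar>y\<bar> powr (p - 1)"
      proof (rule eventually_mono[OF eventually_neq_at_within[where x=0]])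
        fix y :: real assume "y \<noteq> 0"
        then have "\<bar>y\<bar> powr (p - 1) = \<bar>y\<bar> powr (p - 2) * \<bar>y\<bar>"
          using powr_plus1[of "\<bar>y\<bar>" "p - 2"] by (simp add: algebra_simps)
        then show "norm (\<bar>y\<bar> powr (p - 2) * y) \<le> \<bar>y\<bar> powr (p - 1)" by (simp add: abs_mult)
      qed
      show "((\<lambda>y::real. \<bar>y\<bar> powr (p - 1)) \<longlongrightarrow> 0) (at 0)"
        using p by (intro tendsto_zero_powrI tendsto_rabs_zero tendsto_ident_at) auto
    qed
    then show ?thesis using True by (simp add: isCont_def)
  next
    case False
    then show ?thesis by (intro continuous_intros) (auto intro!: tendsto_powr simp: isCont_def)
  qed
  then show ?thesis by (simp add: continuous_at_imp_continuous_on)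
qed


lemma cont_compact_props:
  fixes f :: "'a::euclidean_space \<Rightarrow> real"
  assumes S: "open S" and K: "compact K" "K \<subseteq> S" and fc: "continuous_on S f"
    and z: "\<And>x. x \<in> S \<Longrightarrow> x \<notin> K \<Longrightarrow> f x = 0"
  shows "integrable lborel (\<lambda>x. if x \<in> S then f x else 0)"
    and "continuous_on UNIV (\<lambda>x. if x \<in> S then f x else 0)"
    and "\<exists>M. \<forall>x. \<bar>if x \<in> S then f x else 0\<bar> \<le> M"
proof -
  let ?g = "\<lambda>x. if x\<in>S then f x else 0"
  have zero: "?g x = 0" if "x \<notin> K" for x using that z by auto
  have c1: "continuous_on S ?g" using fc by (rule continuous_on_eq) auto
  have c2: "continuous_on (-K) ?g" by (rule continuous_on_eq[OF continuous_on_const]) (auto simp: zero)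
  have "continuous_on (S \<union> -K) ?g"
    using c1 c2 S K by (intro continuous_on_open_Un) (auto simp: compact_imp_closed open_Compl)
  moreover have "S \<union> -K = UNIV" using K by auto
  ultimately show cont: "continuous_on UNIV ?g" by simp
  have meas: "?g \<in> borel_measurable lborel"
    using borel_measurable_continuous_onI[OF cont] by simp
  have "compact (?g ` K)" using K cont by (meson compact_continuous_image continuous_on_subset top_greatest)
  then obtain M where M: "\<And>y. y \<in> ?g ` K \<Longrightarrow> norm y \<le> M"
    using compact_imp_bounded bounded_iff by metis
  have bnd: "norm (?g x) \<le> norm (M * indicator K x)" for x
  proof (cases "x \<in> K")
    case True then show ?thesis using M[of "?g x"] by auto
  next
    case False then show ?thesis using zero by simp
  qed
  have "\<bar>?g x\<bar> \<le> max M 0" for x using M[of "?g x"] zero[of x] by (cases "x\<in>K") auto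
  then show "\<exists>M. \<forall>x. \<bar>?g x\<bar> \<le> M" by blast
  have fin: "emeasure lborel K < \<infinity>"
    by (rule emeasure_compact_finite[OF K(1)])
  have intM: "integrable lborel (\<lambda>x. M * indicator K x)"
    using fin K by (intro integrable_mult_right integrable_real_indicator) (auto simp: compact_imp_closed)
  show "integrable lborel ?g" by (rule Bochner_Integration.integrable_bound[OF intM meas AE_I2[OF bnd]])
qed

lemma ibp:
  fixes F :: "'a::euclidean_space \<Rightarrow> real"
  assumes S: "open S" and K: "compact K" "K \<subseteq> S" and z: "\<And>x. x \<notin> K \<Longrightarrow> F x = 0"
    and C: "C1 S F F'"
  shows "integrable lborel (\<lambda>x. if x \<in> S then F' x b else 0)"
    and "integral\<^sup>L lborel (\<lambda>x. if x \<in> S then F' x b else 0) = 0"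
proof -
  define F'' where "F'' x = (if x \<in> S then F' x else (\<lambda>_. 0))" for x
  let ?G = "\<lambda>x. if x \<in> S then F' x b else 0"
  have KC: "open (-K)" using K by (simp add: compact_imp_closed open_Compl)
  have der0: "(F has_derivative (\<lambda>_. 0)) (at x)" if "x \<notin> K" for x
    by (rule has_derivative_transform_within_open[where f="\<lambda>_. 0" and s="-K"]) (use z that KC in auto)
  have derS: "(F has_derivative F' x) (at x)" if "x \<in> S" for x
    using C that unfolding C1_def by auto
  have Fz: "F' x b = 0" if "x \<in> S" "x \<notin> K" for x
    using has_derivative_unique[OF derS[OF that(1)] der0[OF that(2)]] by simp
  have der: "(F has_derivative F'' x) (at x)" for x
    using derS der0 K unfolding F''_def by auto
  have GF: "?G x = F'' x b" for x unfolding F''_def by auto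
  have Gc: "continuous_on S (\<lambda>x. F' x b)" using C unfolding C1_def by auto
  note P = cont_compact_props[OF S K Gc Fz]
  show intG: "integrable lborel ?G" by (rule P(1))
  obtain M where M: "\<And>x. \<bar>?G x\<bar> \<le> M" using P(3) by blast
  have Fcont: "continuous_on UNIV F"
    using der by (meson continuous_at_imp_continuous_on has_derivative_continuous)
  have Fmeas: "F \<in> borel_measurable borel" by (rule borel_measurable_continuous_onI[OF Fcont])
  have intF: "integrable lborel F"
    using cont_compact_props(1)[of UNIV K F] K Fcont z by auto
  have trans: "integral\<^sup>L lborel (\<lambda>x. F (x + c)) = integral\<^sup>L lborel F"
     and transI: "integrable lborel (\<lambda>x. F (x + c))" for c
  proof -
    have "integral\<^sup>L lborel F = integral\<^sup>L (distr lborel borel ((+) c)) F"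
      by (simp add: lborel_distr_plus)
    also have "\<dots> = integral\<^sup>L lborel (\<lambda>x. F (c + x))"
      by (rule integral_distr) (auto simp: Fmeas)
    finally show "integral\<^sup>L lborel (\<lambda>x. F (x + c)) = integral\<^sup>L lborel F" by (simp add: add.commute)
    have "integrable (distr lborel borel ((+) c)) F"
      by (simp add: lborel_distr_plus intF)
    then have "integrable lborel (\<lambda>x. F (c + x))"
      by (subst (asm) integrable_distr_eq) (auto simp: Fmeas)
    then show "integrable lborel (\<lambda>x. F (x + c))" by (simp add: add.commute)
  qed
  define h where "h n = 1 / real (Suc n)" for n
  have hpos: "0 < h n" "h n \<le> 1" for n unfolding h_def by auto
  define q where "q n x = (F (x + h n *\<^sub>R b) - F x) / h n" for n x
  have intq0: "integral\<^sup>L lborel (q n) = 0" for n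
  proof -
    have "integral\<^sup>L lborel (q n) = integral\<^sup>L lborel (\<lambda>x. F (x + h n *\<^sub>R b) - F x) / h n"
      unfolding q_def by simp
    also have "\<dots> = 0" using transI intF trans by simp
    finally show ?thesis .
  qed
  have phider: "((\<lambda>s. F (x + s *\<^sub>R b)) has_real_derivative F'' (x + s *\<^sub>R b) b) (at s)" for x s
  proof -
    have l: "bounded_linear (F'' (x + s *\<^sub>R b))" using der has_derivative_bounded_linear by blast
    have "((\<lambda>s. F (x + s *\<^sub>R b)) has_derivative (\<lambda>r. F'' (x + s *\<^sub>R b) (r *\<^sub>R b))) (at s)"
      using der by (auto intro!: derivative_eq_intros has_derivative_compose[of "\<lambda>s. x + s *\<^sub>R b" _ _ _ F])
    moreover have "(\<lambda>r. F'' (x + s *\<^sub>R b) (r *\<^sub>R b)) = (\<lambda>r. F'' (x + s *\<^sub>R b) b * r)"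
      using l by (simp add: linear_simps mult.commute)
    ultimately show ?thesis by (simp add: has_field_derivative_def)
  qed
  have lim: "(\<lambda>n. q n x) \<longlonglongrightarrow> ?G x" for x
  proof -
    have "((\<lambda>r. (F (x + (0 + r) *\<^sub>R b) - F (x + 0 *\<^sub>R b)) / r) \<longlongrightarrow> F'' (x + 0 *\<^sub>R b) b) (at 0)"
      using phider[of x 0] unfolding DERIV_def .
    then have t: "((\<lambda>r. (F (x + r *\<^sub>R b) - F x) / r) \<longlongrightarrow> ?G x) (at 0)"
      by (simp add: GF)
    have hl: "filterlim h (at 0) sequentially"
      unfolding h_def filterlim_at
      by (auto intro!: LIMSEQ_Suc[OF lim_inverse_n'] simp: eventually_sequentially simp del: of_nat_Suc)
    show ?thesis unfolding q_def using filterlim_compose[OF t hl] by simp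
  qed
  have qbound: "\<bar>q n x\<bar> \<le> M" for n x
  proof -
    obtain \<xi> where "0 < \<xi>" "\<xi> < h n" and eq: "F (x + h n *\<^sub>R b) - F (x + 0 *\<^sub>R b) = (h n - 0) * F'' (x + \<xi> *\<^sub>R b) b"
      using MVT2[OF hpos(1)[of n], of "\<lambda>s. F (x + s *\<^sub>R b)" "\<lambda>s. F'' (x + s *\<^sub>R b) b"] phider by blast
    then have "q n x = ?G (x + \<xi> *\<^sub>R b)" unfolding q_def using hpos[of n] by (simp add: GF)
    then show ?thesis using M by simp
  qed
  define K' where "K' = (\<lambda>p. fst p - snd p *\<^sub>R b) ` (K \<times> {0..1::real})"
  have K'c: "compact K'" unfolding K'_def
    using K by (intro compact_continuous_image compact_Times) (auto intro!: continuous_intros)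
  have qz: "q n x = 0" if "x \<notin> K'" for n x
  proof -
    have "x \<notin> K" using that unfolding K'_def by (force simp: image_iff)
    moreover have "x + h n *\<^sub>R b \<notin> K"
    proof
      assume "x + h n *\<^sub>R b \<in> K"
      then have "x \<in> K'" unfolding K'_def using hpos[of n]
        by (auto simp: image_iff intro!: bexI[of _ "x + h n *\<^sub>R b"] bexI[of _ "h n"])
      then show False using that by simp
    qed
    ultimately show ?thesis unfolding q_def using z by simp
  qed
  have qmeas: "q n \<in> borel_measurable lborel" for n
  proof -
    have "continuous_on UNIV (q n)" unfolding q_def
      using hpos(1)[of n] by (intro continuous_intros continuous_on_compose2[OF Fcont]) auto
    then show ?thesis using borel_measurable_continuous_onI by simp
  qed
  have intw: "integrable lborel (\<lambda>x. M * indicator K' x)"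
    using K'c emeasure_compact_finite[OF K'c] by (intro integrable_mult_right integrable_real_indicator)
      (auto simp: compact_imp_closed)
  have "(\<lambda>n. integral\<^sup>L lborel (q n)) \<longlonglongrightarrow> integral\<^sup>L lborel ?G"
  proof (rule integral_dominated_convergence[OF _ qmeas intw])
    show "?G \<in> borel_measurable lborel" using intG by auto
    show "AE x in lborel. (\<lambda>i. q i x) \<longlonglongrightarrow> ?G x" using lim by auto
    show "AE x in lborel. norm (q n x) \<le> M * indicator K' x" for n
      using qbound qz by (auto simp: indicator_def)
  qed
  then show "integral\<^sup>L lborel ?G = 0"
    using intq0 by (simp add: LIMSEQ_const_iff)
qed


lemma sum_axis_eq: "(\<Sum>k\<in>A. axis i (f k)) = axis i (\<Sum>k\<in>A. f k :: 'a::comm_monoid_add)"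
  by (induct A rule: infinite_finite_induct) (auto simp: vec_eq_iff axis_def)
lemma sum_axis_self: "(\<Sum>i\<in>UNIV. axis i (x $ i)) = (x :: 'a::comm_monoid_add ^ 'n::finite)"
proof -
  have "(\<Sum>i\<in>UNIV. axis i (x $ i)) $ j = x $ j" for j
  proof -
    have "(\<Sum>i\<in>UNIV. axis i (x $ i)) $ j = (\<Sum>i\<in>UNIV. axis i (x $ i) $ j)"
      by (induct "UNIV :: 'n set" rule: infinite_finite_induct) auto
    also have "\<dots> = (\<Sum>i\<in>UNIV. if j = i then x $ i else 0)"
      by (intro sum.cong) (auto simp: axis_def)
    finally show ?thesis by simp
  qed
  then show ?thesis by (simp add: vec_eq_iff)
qed
lemma scaleR_axis: "c *\<^sub>R axis i v = axis i (c *\<^sub>R v)"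
  by (simp add: vec_eq_iff axis_def)
lemma axis3: "(\<Sum>j\<in>UNIV. \<Sum>i\<in>UNIV. \<Sum>k\<in>UNIV. (x $ j $ i $ k) *\<^sub>R axis j (axis i (axis k (1::real))))
   = (x :: real^'k::finite^'i::finite^'j::finite)"
proof -
  have "(\<Sum>j\<in>UNIV. \<Sum>i\<in>UNIV. \<Sum>k\<in>UNIV. (x $ j $ i $ k) *\<^sub>R axis j (axis i (axis k (1::real))))
     = (\<Sum>j\<in>UNIV. \<Sum>i\<in>UNIV. \<Sum>k\<in>UNIV. axis j (axis i (axis k (x $ j $ i $ k))))"
    by (simp add: scaleR_axis)
  also have "\<dots> = x"
    by (simp add: sum_axis_eq sum_axis_self)
  finally show ?thesis .
qed

definition ez :: "'N \<Rightarrow> 'n \<Rightarrow> 2 \<Rightarrow> ('n::finite,'N::finite) heis" where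
  "ez j i k = (axis j (axis i (axis k 1)), 0)"
definition et :: "'N \<Rightarrow> ('n::finite,'N::finite) heis" where
  "et j = (0, axis j 1)"
definition zc :: "'N \<Rightarrow> 'n \<Rightarrow> 2 \<Rightarrow> ('n::finite,'N::finite) heis \<Rightarrow> real" where
  "zc j i k x = fst x $ j $ i $ k"
definition tc :: "'N \<Rightarrow> ('n::finite,'N::finite) heis \<Rightarrow> real" where
  "tc j x = snd x $ j"

lemma zc_lin: "bounded_linear (zc j i k)"
  unfolding zc_def
  by (intro bounded_linear_compose[OF bounded_linear_vec_nth, of _ k] bounded_linear_compose[OF bounded_linear_vec_nth, of _ i]
      bounded_linear_compose[OF bounded_linear_vec_nth, of _ j] bounded_linear_fst)

lemma tc_lin: "bounded_linear (tc j)"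
  unfolding tc_def
  by (intro bounded_linear_compose[OF bounded_linear_vec_nth, of _ j] bounded_linear_snd)

lemma zc_ez [simp]: "zc j i k (ez j' i' k') = (if j = j' \<and> i = i' \<and> k = k' then 1 else 0)"
  by (simp add: zc_def ez_def axis_def)
lemma zc_et [simp]: "zc j i k (et j') = 0"
  by (simp add: zc_def et_def)
lemma tc_ez [simp]: "tc j (ez j' i' k') = 0"
  by (simp add: tc_def ez_def)
lemma tc_et [simp]: "tc j (et j') = (if j = j' then 1 else 0)"
  by (simp add: tc_def et_def axis_def)

lemma hfield1: "hfield j i 1 x = ez j i 1 + (2 * zc j i 2 x) *\<^sub>R et j"
  by (auto simp: hfield_def ez_def et_def zc_def vec_eq_iff prod_eq_iff axis_def)
lemma hfield2: "hfield j i 2 x = ez j i 2 + (- 2 * zc j i 1 x) *\<^sub>R et j"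
  by (auto simp: hfield_def ez_def et_def zc_def vec_eq_iff prod_eq_iff axis_def)

lemma decomp:
  "(x :: ('n::finite,'N::finite) heis) = (\<Sum>j\<in>UNIV. \<Sum>i\<in>UNIV. \<Sum>k\<in>UNIV. zc j i k x *\<^sub>R ez j i k)
      + (\<Sum>j\<in>UNIV. tc j x *\<^sub>R et j)"
proof (rule prod_eqI)
  show "fst x = fst ((\<Sum>j\<in>UNIV. \<Sum>i\<in>UNIV. \<Sum>k\<in>UNIV. zc j i k x *\<^sub>R ez j i k)
      + (\<Sum>j\<in>UNIV. tc j x *\<^sub>R (et j :: ('n,'N) heis)))"
    by (simp only: fst_add fst_sum fst_scaleR) (simp add: et_def ez_def zc_def axis3)
  have "snd x = (\<Sum>j\<in>UNIV. tc j x *\<^sub>R axis j 1)"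
    by (simp add: tc_def scaleR_axis sum_axis_self)
  then show "snd x = snd ((\<Sum>j\<in>UNIV. \<Sum>i\<in>UNIV. \<Sum>k\<in>UNIV. zc j i k x *\<^sub>R ez j i k)
      + (\<Sum>j\<in>UNIV. tc j x *\<^sub>R (et j :: ('n,'N) heis)))"
    by (simp only: snd_add snd_sum snd_scaleR) (simp add: ez_def et_def)
qed

lemma decomp_lin:
  assumes "linear L"
  shows "L (fst x, 2 *\<^sub>R snd x) = (\<Sum>j\<in>UNIV. \<Sum>i\<in>UNIV. \<Sum>k\<in>UNIV. zc j i k x * L (ez j i k))
      + 2 * (\<Sum>j\<in>UNIV. tc j x * L (et j :: ('n::finite,'N::finite) heis))"
proof -
  have "(fst x, 2 *\<^sub>R snd x) = (\<Sum>j\<in>UNIV. \<Sum>i\<in>UNIV. \<Sum>k\<in>UNIV. zc j i k x *\<^sub>R ez j i k)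
      + (\<Sum>j\<in>UNIV. (2 * tc j x) *\<^sub>R et j)"
    by (subst decomp[of "(fst x, 2 *\<^sub>R snd x)"]) (simp add: zc_def tc_def)
  then have "L (fst x, 2 *\<^sub>R snd x) = L ((\<Sum>j\<in>UNIV. \<Sum>i\<in>UNIV. \<Sum>k\<in>UNIV. zc j i k x *\<^sub>R ez j i k)
      + (\<Sum>j\<in>UNIV. (2 * tc j x) *\<^sub>R et j))" by simp
  also have "\<dots> = (\<Sum>j\<in>UNIV. \<Sum>i\<in>UNIV. \<Sum>k\<in>UNIV. zc j i k x * L (ez j i k))
      + (\<Sum>j\<in>UNIV. (2 * tc j x) * L (et j))"
    using assms by (simp add: linear_add linear_sum linear_scale)
  also have "(\<Sum>j\<in>UNIV. (2 * tc j x) * L (et j)) = 2 * (\<Sum>j\<in>UNIV. tc j x * L (et j))"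
    by (simp add: sum_distrib_left mult.assoc)
  finally show ?thesis .
qed

lemma euler:
  fixes d :: "('n::finite,'N::finite) heis \<Rightarrow> real"
  assumes hn: "homogeneous_norm d" and der: "(d has_derivative D) (at x)"
  shows "D (fst x, 2 *\<^sub>R snd x) = d x"
proof -
  have lD: "linear D" using der has_derivative_linear by blast
  have g: "((\<lambda>c::real. (c *\<^sub>R fst x, c\<^sup>2 *\<^sub>R snd x)) has_derivative
           (\<lambda>h. (h *\<^sub>R fst x, (2 * h) *\<^sub>R snd x))) (at 1)"
    by (auto intro!: derivative_eq_intros has_derivative_Pair simp: fun_eq_iff)
  have "((\<lambda>c. d (c *\<^sub>R fst x, c\<^sup>2 *\<^sub>R snd x)) has_derivative
        (\<lambda>h. D (h *\<^sub>R fst x, (2 * h) *\<^sub>R snd x))) (at 1)"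
    using has_derivative_compose[OF g, of d D] der by simp
  moreover have "(\<lambda>h. D (h *\<^sub>R fst x, (2 * h) *\<^sub>R snd x)) = (\<lambda>h. D (fst x, 2 *\<^sub>R snd x) * h)"
  proof
    fix h :: real
    have e: "(h *\<^sub>R fst x, (2 * h) *\<^sub>R snd x) = h *\<^sub>R (fst x, 2 *\<^sub>R snd x)" by simp
    show "D (h *\<^sub>R fst x, (2 * h) *\<^sub>R snd x) = D (fst x, 2 *\<^sub>R snd x) * h"
      unfolding e linear_scale[OF lD] by simp
  qed
  ultimately have d1: "((\<lambda>c. d (c *\<^sub>R fst x, c\<^sup>2 *\<^sub>R snd x)) has_real_derivative D (fst x, 2 *\<^sub>R snd x)) (at 1)"
    by (simp add: has_field_derivative_def)
  have ev: "\<forall>\<^sub>F c in nhds 1. d (c *\<^sub>R fst x, c\<^sup>2 *\<^sub>R snd x) = c * d x"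
  proof -
    have "\<forall>\<^sub>F c in nhds (1::real). c \<in> {0<..}"
      by (rule eventually_nhds_in_open) auto
    then show ?thesis
      using hn unfolding homogeneous_norm_def heis_dil_def
      by (auto elim!: eventually_mono)
  qed
  have "((\<lambda>c. c * d x) has_real_derivative d x) (at 1)"
    by (auto intro!: derivative_eq_intros)
  then have d2: "((\<lambda>c. d (c *\<^sub>R fst x, c\<^sup>2 *\<^sub>R snd x)) has_real_derivative d x) (at 1)"
    using DERIV_cong_ev[OF refl ev refl] by simp
  show ?thesis using DERIV_unique[OF d1 d2] .
qed


lemma ji_identity:
  fixes D n g h c c1 c2 pt \<phi> t z1 z2 w A1 A2 B U1 U2 UB s12 s21 s1t st1 s2t st2 stt :: real
  assumes D: "D > 0" and n: "n > 0" and g: "g = h * D"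
    and sym: "s12 = s21" "s1t = st1" "s2t = st2"
    and c1: "c1 = (n + 1) / n" and c2: "c2 = pt / (2 * n)"
  defines "P1 \<equiv> A1 + 2 * (z2 * B)" and "P2 \<equiv> A2 - 2 * (z1 * B)"
  shows "h * D\<^sup>2 * \<phi> * ((U1 + 2 * z2 * UB) * (c1 / D * z1 - c2 / D\<^sup>2 * (t * - P2))
            + (U2 + - 2 * z1 * UB) * (c1 / D * z2 - c2 / D\<^sup>2 * (t * P1)))
   = c1 * ((z1 * (g * (\<phi> * U1) + (- pt * h * A1) * w) + g * w) + (z2 * (g * (\<phi> * U2) + (- pt * h * A2) * w) + g * w))
     - c2 * ((t * (w * (h * (s12 + 2 * (z2 * st2 + B)) + c * A2 * P1) + \<phi> * U2 * (h * P1)))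
          - 2 * (z1 * (t * (w * (h * (s1t + 2 * (z2 * stt)) + c * B * P1) + \<phi> * UB * (h * P1)) + w * (h * P1)))
          - (t * (w * (h * (s21 - 2 * (z1 * st1 + B)) + c * A1 * P2) + \<phi> * U1 * (h * P2)))
          - 2 * (z2 * (t * (w * (h * (s2t - 2 * (z1 * stt)) + c * B * P2) + \<phi> * UB * (h * P2)) + w * (h * P2))))
     + (pt * w * h) * (z1 * A1 + z2 * A2) + (2 * pt / n * w * h) * (t * B) - 2 * c1 * g * w"
  unfolding P1_def P2_def g c1 c2 sym using D n
  by (simp add: field_simps power2_eq_square)

lemma sum3_affine:
  "(\<Sum>j\<in>(UNIV::'a::finite set). \<Sum>i\<in>(UNIV::'b::finite set). \<Sum>k\<in>(UNIV::'c::finite set). a * f j i k + b * g j i k + c)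
   = a * (\<Sum>j\<in>UNIV. \<Sum>i\<in>UNIV. \<Sum>k\<in>UNIV. f j i k) + b * (\<Sum>j\<in>UNIV. \<Sum>i\<in>UNIV. \<Sum>k\<in>UNIV. g j i k)
     + real (CARD('a) * CARD('b) * CARD('c)) * (c::real)"
  by (simp add: sum.distrib sum_distrib_left)

lemma sum2_affine:
  "(\<Sum>j\<in>(UNIV::'a::finite set). \<Sum>i\<in>(UNIV::'b::finite set). a * f j i - b * g j i + c * k j i + e * l j i - m)
   = a * (\<Sum>j\<in>UNIV. \<Sum>i\<in>UNIV. f j i) - b * (\<Sum>j\<in>UNIV. \<Sum>i\<in>UNIV. g j i)
     + c * (\<Sum>j\<in>UNIV. \<Sum>i\<in>UNIV. k j i) + e * (\<Sum>j\<in>UNIV. \<Sum>i\<in>UNIV. l j i)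
     - real (CARD('a) * CARD('b)) * (m::real)"
  by (simp add: sum.distrib sum_subtractf sum_distrib_left)

lemma sum_if_mult:
  "(\<Sum>j'\<in>(UNIV::'a::finite set). a j' * (if j = j' then V else 0)) = a j * (V::real)"
proof -
  have "(\<Sum>j'\<in>(UNIV::'a::finite set). a j' * (if j = j' then V else 0)) = (\<Sum>j'\<in>UNIV. if j = j' then a j' * V else 0)"
    by (intro sum.cong) auto
  also have "\<dots> = a j * V" by (simp add: sum.delta)
  finally show ?thesis .
qed

lemma sum1_affine:
  "(\<Sum>j\<in>(UNIV::'a::finite set). a * f j + b * g j + c)
   = a * (\<Sum>j\<in>UNIV. f j) + b * (\<Sum>j\<in>UNIV. g j) + real CARD('a) * (c::real)"
  by (simp add: sum.distrib sum_distrib_left)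


theorem proposition4p1:
  fixes d u :: "('n::finite,'N::finite) heis \<Rightarrow> real" and p \<theta> :: real
  assumes "homogeneous_norm d"
    and "smooth_on (UNIV - {0}) d"
    and "p \<ge> 2"
    and "smooth_on (UNIV - {0}) u"
    and "compact (closure {x. u x \<noteq> 0})"
    and "closure {x. u x \<noteq> 0} \<subseteq> UNIV - {0}"
  shows "(\<integral>x. \<bar>u x\<bar> powr (p - 2) * u x * euler_op u x / d x powr (p * \<theta>) \<partial>lborel)
       = (\<integral>x. \<bar>u x\<bar> powr (p - 2) * u x / d x powr (p * \<theta> - 1) * (hgrad u x \<bullet> Zd p \<theta> d x) \<partial>lborel)"
proof -
  define S :: "('n,'N) heis set" where "S = UNIV - {0}"
  have Sopen: "open S" unfolding S_def by (simp add: open_Diff)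
  define K where "K = closure {x. u x \<noteq> 0}"
  have Kc: "compact K" using assms(5) unfolding K_def by simp
  have KS: "K \<subseteq> S" using assms(6) unfolding K_def S_def by simp
  have uz: "u x = 0" if "x \<notin> K" for x
  proof (rule ccontr)
    assume "u x \<noteq> 0"
    then have "x \<in> {x. u x \<noteq> 0}" by simp
    then have "x \<in> K" unfolding K_def using closure_subset by (rule subsetD[rotated])
    then show False using that by simp
  qed
  have u0: "u x = 0" if "x \<notin> S" for x using that KS uz by (meson subsetD)
  define u' where "u' x = frechet_derivative u (at x)" for x
  define d' where "d' x = frechet_derivative d (at x)" for x
  define dd where "dd v x = frechet_derivative (\<lambda>y. d' y v) (at x)" for v x
  have CkU: "Ck_on (Suc 0) S u" using assms(4) unfolding smooth_on_def S_def by blast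
  have CkD: "Ck_on (Suc (Suc 0)) S d" using assms(2) unfolding smooth_on_def S_def by blast
  have uC: "C1 S u u'"
  proof -
    have "\<forall>x\<in>S. u differentiable (at x)" "\<forall>v. continuous_on S (\<lambda>x. frechet_derivative u (at x) v)"
      using CkU by simp_all
    then show ?thesis unfolding C1_def u'_def by (simp add: frechet_derivative_works)
  qed
  have CkD': "\<forall>x\<in>S. d differentiable (at x)" "\<forall>v. continuous_on S (\<lambda>x. frechet_derivative d (at x) v)"
     "\<forall>v. \<forall>x\<in>S. (\<lambda>x. frechet_derivative d (at x) v) differentiable (at x)"
     "\<forall>v e. continuous_on S (\<lambda>x. frechet_derivative (\<lambda>x. frechet_derivative d (at x) v) (at x) e)"
    using CkD by simp_all
  have dC: "C1 S d d'"
    using CkD'(1,2) unfolding C1_def d'_def by (simp add: frechet_derivative_works)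
  have ddC: "C1 S (\<lambda>x. d' x v) (dd v)" for v
    using CkD'(3,4) unfolding C1_def dd_def d'_def frechet_derivative_works by blast
  have dpos: "d x > 0" if "x \<in> S" for x
  proof -
    have "\<forall>x. x \<noteq> 0 \<longrightarrow> d x > 0" using assms(1) unfolding homogeneous_norm_def by blast
    then show ?thesis using that unfolding S_def by blast
  qed
  have dder: "(d has_derivative d' x) (at x)" if "x \<in> S" for x
    using dC that unfolding C1_def by auto
  have eul: "d' x (fst x, 2 *\<^sub>R snd x) = d x" if "x \<in> S" for x
    using euler[OF assms(1) dder[OF that]] .
  have linu: "linear (u' x)" if "x \<in> S" for x
    using uC that unfolding C1_def by (auto intro: has_derivative_linear)
  have lind: "linear (d' x)" if "x \<in> S" for x
    using dder[OF that] by (rule has_derivative_linear)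
  have sym: "dd a x b = dd b x a" if "x \<in> S" for x a b
  proof (rule clairaut[OF Sopen that, of d d' a "dd a" b "dd b"])
    show "\<And>y. y \<in> S \<Longrightarrow> (d has_derivative d' y) (at y)" by (rule dder)
    show "\<And>y. y \<in> S \<Longrightarrow> ((\<lambda>y. d' y a) has_derivative dd a y) (at y)"
      using ddC unfolding C1_def by auto
    show "\<And>y. y \<in> S \<Longrightarrow> ((\<lambda>y. d' y b) has_derivative dd b y) (at y)"
      using ddC unfolding C1_def by auto
    have "continuous_on S (\<lambda>y. dd a y b)" using ddC[of a] unfolding C1_def by blast
    then show "continuous (at x) (\<lambda>y. dd a y b)"
      using continuous_on_eq_continuous_at[OF Sopen] that by blast
    have "continuous_on S (\<lambda>y. dd b y a)" using ddC[of b] unfolding C1_def by blast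
    then show "continuous (at x) (\<lambda>y. dd b y a)"
      using continuous_on_eq_continuous_at[OF Sopen] that by blast
  qed
  define ph where "ph s = \<bar>s\<bar> powr (p - 2) * s" for s :: real
  define w where "w x = \<bar>u x\<bar> powr p / p" for x
  define wd where "wd x v = ph (u x) * u' x v" for x v
  have wC: "C1 S w wd"
    using C1_comp[OF uC, of "\<lambda>s. \<bar>s\<bar> powr p / p" ph] psi_deriv[OF assms(3)] phi_cont[OF assms(3)]
    unfolding w_def wd_def ph_def by (auto intro: continuous_on_subset)
  have wz: "w x = 0" if "x \<notin> K" for x using uz[OF that] unfolding w_def by simp
  define g where "g x = d x powr (- (p * \<theta>))" for x
  define h where "h x = d x powr (- (p * \<theta>) - 1)" for x
  define gd where "gd x v = (- (p * \<theta>) * h x) * d' x v" for x v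
  define hd where "hd x v = ((- (p * \<theta>) - 1) * d x powr (- (p * \<theta>) - 1 - 1)) * d' x v" for x v
  have powC: "C1 S (\<lambda>x. d x powr r) (\<lambda>x v. (r * d x powr (r - 1)) * d' x v)" for r
  proof (rule C1_comp[OF dC])
    show "((\<lambda>s. s powr r) has_real_derivative r * d x powr (r - 1)) (at (d x))" if "x \<in> S" for x
      using has_real_derivative_powr[OF dpos[OF that]] .
    have "continuous_on {0<..} (\<lambda>s::real. r * s powr (r - 1))"
      by (intro continuous_intros) auto
    moreover have "d ` S \<subseteq> {0<..}" using dpos by auto
    ultimately show "continuous_on (d ` S) (\<lambda>s. r * s powr (r - 1))"
      by (rule continuous_on_subset)
  qed
  have gC: "C1 S g gd" using powC[of "- (p * \<theta>)"] unfolding g_def gd_def h_def by simp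
  have hC: "C1 S h hd" using powC[of "- (p * \<theta>) - 1"] unfolding h_def hd_def by simp
  have IBP: "integrable lborel (\<lambda>x. if x \<in> S then F' x b else 0) \<and>
       integral\<^sup>L lborel (\<lambda>x. if x \<in> S then F' x b else 0) = 0"
    if "C1 S F F'" "\<And>x. x \<notin> K \<Longrightarrow> F x = 0" for F F' b
    using ibp[OF Sopen Kc KS that(2) that(1)] by auto
  have IBP2: "integrable lborel (\<lambda>x. if x \<in> S then G x else 0) \<and>
       integral\<^sup>L lborel (\<lambda>x. if x \<in> S then G x else 0) = 0"
    if "C1 S F F'" "\<And>x. x \<notin> K \<Longrightarrow> F x = 0" "\<And>x. x \<in> S \<Longrightarrow> F' x b = G x" for F F' b G
  proof -
    have "(\<lambda>x. if x \<in> S then G x else 0) = (\<lambda>x. if x \<in> S then F' x b else 0)"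
      using that(3) by auto
    then show ?thesis using IBP[OF that(1,2)] by simp
  qed
  have gwC: "C1 S (\<lambda>x. g x * w x) (\<lambda>x v. g x * wd x v + gd x v * w x)"
    by (rule C1_mult[OF gC wC])
  define Ga where "Ga j i k x = (if x \<in> S then zc j i k x * (g x * wd x (ez j i k) + gd x (ez j i k) * w x) + g x * w x else 0)" for j i k x
  have Ga: "integrable lborel (Ga j i k) \<and> integral\<^sup>L lborel (Ga j i k) = 0" for j i k
  proof -
    have "(\<lambda>x. if x \<in> S then zc j i k x * (g x * wd x (ez j i k) + gd x (ez j i k) * w x) + zc j i k (ez j i k) * (g x * w x) else 0) = Ga j i k"
      by (simp add: Ga_def fun_eq_iff)
    then show ?thesis using IBP[OF C1_mult[OF C1_lin[OF zc_lin[of j i k]] gwC], where b="ez j i k"] wz by simp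
  qed
  define Gb where "Gb j x = (if x \<in> S then tc j x * (g x * wd x (et j) + gd x (et j) * w x) + g x * w x else 0)" for j x
  have Gb: "integrable lborel (Gb j) \<and> integral\<^sup>L lborel (Gb j) = 0" for j
  proof -
    have I: "integrable lborel (\<lambda>x. if x \<in> S then tc j x * (g x * wd x (et j) + gd x (et j) * w x) + tc j (et j :: ('n,'N) heis) * (g x * w x) else 0)
       \<and> integral\<^sup>L lborel (\<lambda>x. if x \<in> S then tc j x * (g x * wd x (et j) + gd x (et j) * w x) + tc j (et j :: ('n,'N) heis) * (g x * w x) else 0) = 0"
      by (rule IBP[OF C1_mult[OF C1_lin[OF tc_lin[of j]] gwC]]) (simp add: wz)
    have e: "(\<lambda>x. if x \<in> S then tc j x * (g x * wd x (et j) + gd x (et j) * w x) + tc j (et j :: ('n,'N) heis) * (g x * w x) else 0) = Gb j"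
      by (simp add: Gb_def fun_eq_iff)
    show ?thesis using I unfolding e .
  qed
  define P1 where "P1 j i x = d' x (ez j i 1) + 2 * (zc j i 2 x * d' x (et j))" for j i x
  define P2 where "P2 j i x = d' x (ez j i 2) - 2 * (zc j i 1 x * d' x (et j))" for j i x
  have P1C: "C1 S (P1 j i) (\<lambda>x v. dd (ez j i 1) x v + 2 * (zc j i 2 x * dd (et j) x v + zc j i 2 v * d' x (et j)))" for j i
    unfolding P1_def by (rule C1_add[OF ddC C1_cmult[OF C1_mult[OF C1_lin[OF zc_lin] ddC]]])
  have P2C: "C1 S (P2 j i) (\<lambda>x v. dd (ez j i 2) x v - 2 * (zc j i 1 x * dd (et j) x v + zc j i 1 v * d' x (et j)))" for j i
    unfolding P2_def by (rule C1_diff[OF ddC C1_cmult[OF C1_mult[OF C1_lin[OF zc_lin] ddC]]])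
  define G1a where "G1a j i x = (if x \<in> S then tc j x * (w x * (h x * (dd (ez j i 1) x (ez j i 2) + 2 * (zc j i 2 x * dd (et j) x (ez j i 2) + d' x (et j))) + hd x (ez j i 2) * P1 j i x) + wd x (ez j i 2) * (h x * P1 j i x)) else 0)" for j i x
  define G1b where "G1b j i x = (if x \<in> S then zc j i 1 x * (tc j x * (w x * (h x * (dd (ez j i 1) x (et j) + 2 * (zc j i 2 x * dd (et j) x (et j))) + hd x (et j) * P1 j i x) + wd x (et j) * (h x * P1 j i x)) + w x * (h x * P1 j i x)) else 0)" for j i x
  define G2a where "G2a j i x = (if x \<in> S then tc j x * (w x * (h x * (dd (ez j i 2) x (ez j i 1) - 2 * (zc j i 1 x * dd (et j) x (ez j i 1) + d' x (et j))) + hd x (ez j i 1) * P2 j i x) + wd x (ez j i 1) * (h x * P2 j i x)) else 0)" for j i x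
  define G2b where "G2b j i x = (if x \<in> S then zc j i 2 x * (tc j x * (w x * (h x * (dd (ez j i 2) x (et j) - 2 * (zc j i 1 x * dd (et j) x (et j))) + hd x (et j) * P2 j i x) + wd x (et j) * (h x * P2 j i x)) + w x * (h x * P2 j i x)) else 0)" for j i x
  have F1C: "C1 S (\<lambda>x. tc j x * (w x * (h x * P1 j i x)))
     (\<lambda>x v. tc j x * (w x * (h x * (dd (ez j i 1) x v + 2 * (zc j i 2 x * dd (et j) x v + zc j i 2 v * d' x (et j))) + hd x v * P1 j i x) + wd x v * (h x * P1 j i x)) + tc j v * (w x * (h x * P1 j i x)))" for j i
    by (rule C1_mult[OF C1_lin[OF tc_lin] C1_mult[OF wC C1_mult[OF hC P1C]]])
  have F2C: "C1 S (\<lambda>x. tc j x * (w x * (h x * P2 j i x)))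
     (\<lambda>x v. tc j x * (w x * (h x * (dd (ez j i 2) x v - 2 * (zc j i 1 x * dd (et j) x v + zc j i 1 v * d' x (et j))) + hd x v * P2 j i x) + wd x v * (h x * P2 j i x)) + tc j v * (w x * (h x * P2 j i x)))" for j i
    by (rule C1_mult[OF C1_lin[OF tc_lin] C1_mult[OF wC C1_mult[OF hC P2C]]])
  have F1z: "tc j x * (w x * (h x * P1 j i x)) = 0" if "x \<notin> K" for j i x using that by (simp add: wz)
  have F2z: "tc j x * (w x * (h x * P2 j i x)) = 0" if "x \<notin> K" for j i x using that by (simp add: wz)
  have F1bz: "zc j i 1 x * (tc j x * (w x * (h x * P1 j i x))) = 0" if "x \<notin> K" for j i x using that by (simp add: wz)
  have F2bz: "zc j i 2 x * (tc j x * (w x * (h x * P2 j i x))) = 0" if "x \<notin> K" for j i x using that by (simp add: wz)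
  have G1a: "integrable lborel (G1a j i) \<and> integral\<^sup>L lborel (G1a j i) = 0" for j i
    unfolding G1a_def[abs_def] by (rule IBP2[OF F1C[of j i] F1z, where b="ez j i 2 :: ('n,'N) heis"]) simp_all
  have G2a: "integrable lborel (G2a j i) \<and> integral\<^sup>L lborel (G2a j i) = 0" for j i
    unfolding G2a_def[abs_def] by (rule IBP2[OF F2C[of j i] F2z, where b="ez j i 1 :: ('n,'N) heis"]) simp_all
  have G1b: "integrable lborel (G1b j i) \<and> integral\<^sup>L lborel (G1b j i) = 0" for j i
    unfolding G1b_def[abs_def] by (rule IBP2[OF C1_mult[OF C1_lin[OF zc_lin[of j i 1]] F1C[of j i]] F1bz, where b="et j :: ('n,'N) heis"]) simp_all
  have G2b: "integrable lborel (G2b j i) \<and> integral\<^sup>L lborel (G2b j i) = 0" for j i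
    unfolding G2b_def[abs_def] by (rule IBP2[OF C1_mult[OF C1_lin[OF zc_lin[of j i 2]] F2C[of j i]] F2bz, where b="et j :: ('n,'N) heis"]) simp_all
  define W where "W x = (if x \<in> S then g x * w x else 0)" for x
  have Wi: "integrable lborel W"
    unfolding W_def using wz by (intro cont_compact_props(1)[OF Sopen Kc KS C1_cont[OF gwC]]) auto
  define Q where "Q = 2 * real CARD('N) * (real CARD('n) + 1)"
  have hg: "h x * d x = g x" if "x \<in> S" for x
    using powr_plus1[OF dpos[OF that], of "- (p * \<theta>) - 1"] unfolding h_def g_def by simp
  have linwd: "linear (wd x)" if "x \<in> S" for x
    using wC that unfolding C1_def by (auto intro: has_derivative_linear)
  have eA: "(\<Sum>j\<in>UNIV. \<Sum>i\<in>UNIV. \<Sum>k\<in>UNIV. zc j i k x * d' x (ez j i k)) + 2 * (\<Sum>j\<in>UNIV. tc j x * d' x (et j)) = d x"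
    if "x \<in> S" for x
    using decomp_lin[OF lind[OF that], of x] eul[OF that] by simp
  have Lpt: "\<bar>u x\<bar> powr (p - 2) * u x * euler_op u x / d x powr (p * \<theta>)
      = (\<Sum>j\<in>UNIV. \<Sum>i\<in>UNIV. \<Sum>k\<in>UNIV. Ga j i k x) + 2 * (\<Sum>j\<in>UNIV. Gb j x) - (Q - p * \<theta>) * W x" for x
  proof (cases "x \<in> S")
    case False
    then show ?thesis using u0[OF False] by (simp add: Ga_def Gb_def W_def)
  next
    case xS: True
    define SA where "SA = (\<Sum>j\<in>UNIV. \<Sum>i\<in>UNIV. \<Sum>k\<in>UNIV. zc j i k x * wd x (ez j i k))"
    define SB where "SB = (\<Sum>j\<in>UNIV. tc j x * wd x (et j))"
    define SAd where "SAd = (\<Sum>j\<in>UNIV. \<Sum>i\<in>UNIV. \<Sum>k\<in>UNIV. zc j i k x * d' x (ez j i k))"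
    define SBd where "SBd = (\<Sum>j\<in>UNIV. tc j x * d' x (et j))"
    have e1: "\<bar>u x\<bar> powr (p - 2) * u x * euler_op u x / d x powr (p * \<theta>) = g x * wd x (fst x, 2 *\<^sub>R snd x)"
      unfolding euler_op_def g_def wd_def ph_def u'_def by (simp add: powr_minus_divide)
    have e2: "wd x (fst x, 2 *\<^sub>R snd x) = SA + 2 * SB"
      unfolding SA_def SB_def by (rule decomp_lin[OF linwd[OF xS]])
    have e3: "SAd + 2 * SBd = d x" unfolding SAd_def SBd_def by (rule eA[OF xS])
    have e4: "(\<Sum>j\<in>UNIV. \<Sum>i\<in>UNIV. \<Sum>k\<in>UNIV. Ga j i k x)
        = g x * SA + (- (p * \<theta>) * h x * w x) * SAd + real (CARD('N) * CARD('n) * CARD(2)) * (g x * w x)"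
    proof -
      have "Ga j i k x = g x * (zc j i k x * wd x (ez j i k)) + (- (p * \<theta>) * h x * w x) * (zc j i k x * d' x (ez j i k)) + g x * w x" for j i k
        using xS unfolding Ga_def gd_def by (simp add: algebra_simps)
      then show ?thesis unfolding SA_def SAd_def by (simp only: sum3_affine)
    qed
    have e5: "(\<Sum>j\<in>UNIV. Gb j x) = g x * SB + (- (p * \<theta>) * h x * w x) * SBd + real CARD('N) * (g x * w x)"
    proof -
      have "Gb j x = g x * (tc j x * wd x (et j)) + (- (p * \<theta>) * h x * w x) * (tc j x * d' x (et j)) + g x * w x" for j
        using xS unfolding Gb_def gd_def by (simp add: algebra_simps)
      then show ?thesis unfolding SB_def SBd_def by (simp only: sum1_affine)
    qed
    have e6: "W x = g x * w x" using xS unfolding W_def by simp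
    have hg': "h x * d x = g x" by (rule hg[OF xS])
    have sa: "SAd = d x - 2 * SBd" using e3 by simp
    have gg: "g x = h x * d x" using hg' by simp
    show ?thesis unfolding e1 e2 e4 e5 e6 Q_def sa gg by (simp add: algebra_simps)
  qed
  have key: "(h x) * (d x)\<^sup>2 * (ph (u x)) * (((u' x (ez j i 1)) + 2 * (zc j i 2 x) * (u' x (et j))) * ((((real CARD('n) + 1) / real CARD('n))) / (d x) * (zc j i 1 x) - ((p * \<theta> / (2 * real CARD('n)))) / (d x)\<^sup>2 * ((tc j x) * - (P2 j i x)))
            + ((u' x (ez j i 2)) + - 2 * (zc j i 1 x) * (u' x (et j))) * ((((real CARD('n) + 1) / real CARD('n))) / (d x) * (zc j i 2 x) - ((p * \<theta> / (2 * real CARD('n)))) / (d x)\<^sup>2 * ((tc j x) * (P1 j i x))))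
   = (((real CARD('n) + 1) / real CARD('n))) * (((zc j i 1 x) * ((g x) * ((ph (u x)) * (u' x (ez j i 1))) + (- ((p * \<theta>)) * (h x) * (d' x (ez j i 1))) * (w x)) + (g x) * (w x)) + ((zc j i 2 x) * ((g x) * ((ph (u x)) * (u' x (ez j i 2))) + (- ((p * \<theta>)) * (h x) * (d' x (ez j i 2))) * (w x)) + (g x) * (w x)))
     - ((p * \<theta> / (2 * real CARD('n)))) * (((tc j x) * ((w x) * ((h x) * ((dd (ez j i 1) x (ez j i 2)) + 2 * ((zc j i 2 x) * (dd (et j) x (ez j i 2)) + (d' x (et j)))) + (((- (p * \<theta>) - 1) * d x powr (- (p * \<theta>) - 1 - 1))) * (d' x (ez j i 2)) * (P1 j i x)) + (ph (u x)) * (u' x (ez j i 2)) * ((h x) * (P1 j i x))))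
          - 2 * ((zc j i 1 x) * ((tc j x) * ((w x) * ((h x) * ((dd (ez j i 1) x (et j)) + 2 * ((zc j i 2 x) * (dd (et j) x (et j)))) + (((- (p * \<theta>) - 1) * d x powr (- (p * \<theta>) - 1 - 1))) * (d' x (et j)) * (P1 j i x)) + (ph (u x)) * (u' x (et j)) * ((h x) * (P1 j i x))) + (w x) * ((h x) * (P1 j i x))))
          - ((tc j x) * ((w x) * ((h x) * ((dd (ez j i 2) x (ez j i 1)) - 2 * ((zc j i 1 x) * (dd (et j) x (ez j i 1)) + (d' x (et j)))) + (((- (p * \<theta>) - 1) * d x powr (- (p * \<theta>) - 1 - 1))) * (d' x (ez j i 1)) * (P2 j i x)) + (ph (u x)) * (u' x (ez j i 1)) * ((h x) * (P2 j i x))))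
          - 2 * ((zc j i 2 x) * ((tc j x) * ((w x) * ((h x) * ((dd (ez j i 2) x (et j)) - 2 * ((zc j i 1 x) * (dd (et j) x (et j)))) + (((- (p * \<theta>) - 1) * d x powr (- (p * \<theta>) - 1 - 1))) * (d' x (et j)) * (P2 j i x)) + (ph (u x)) * (u' x (et j)) * ((h x) * (P2 j i x))) + (w x) * ((h x) * (P2 j i x)))))
     + (((p * \<theta>)) * (w x) * (h x)) * ((zc j i 1 x) * (d' x (ez j i 1)) + (zc j i 2 x) * (d' x (ez j i 2))) + (2 * ((p * \<theta>)) / (real CARD('n)) * (w x) * (h x)) * ((tc j x) * (d' x (et j))) - 2 * (((real CARD('n) + 1) / real CARD('n))) * (g x) * (w x)" if "x \<in> S" for j i x
    unfolding P1_def P2_def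
    by (rule ji_identity) (auto simp: dpos that hg[OF that, symmetric] intro: sym[OF that])
  define C where "C j i x = G1a j i x - 2 * G1b j i x - G2a j i x - 2 * G2b j i x" for j i x
  have Gaexp: "Ga j i k x = zc j i k x * (g x * (ph (u x) * u' x (ez j i k)) + (- (p * \<theta>) * h x * d' x (ez j i k)) * w x) + g x * w x"
    if "x \<in> S" for j i k x
    using that unfolding Ga_def gd_def wd_def by (simp add: algebra_simps)
  have key2: "h x * (d x)\<^sup>2 * ph (u x) * ((u' x (ez j i 1) + 2 * zc j i 2 x * u' x (et j)) * ((real CARD('n) + 1) / real CARD('n) / d x * zc j i 1 x - p * \<theta> / (2 * real CARD('n)) / (d x)\<^sup>2 * (tc j x * - P2 j i x))
            + (u' x (ez j i 2) + - 2 * zc j i 1 x * u' x (et j)) * ((real CARD('n) + 1) / real CARD('n) / d x * zc j i 2 x - p * \<theta> / (2 * real CARD('n)) / (d x)\<^sup>2 * (tc j x * P1 j i x)))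
     = (real CARD('n) + 1) / real CARD('n) * (\<Sum>k\<in>UNIV. Ga j i k x) - p * \<theta> / (2 * real CARD('n)) * C j i x
       + (p * \<theta> * w x * h x) * (\<Sum>k\<in>UNIV. zc j i k x * d' x (ez j i k))
       + (2 * (p * \<theta>) / real CARD('n) * w x * h x) * (tc j x * d' x (et j))
       - 2 * ((real CARD('n) + 1) / real CARD('n)) * g x * w x" if xS: "x \<in> S" for j i x
  proof -
    have "(\<Sum>k\<in>UNIV. Ga j i k x) = Ga j i 1 x + Ga j i 2 x" by (simp add: sum_2)
    moreover have "(\<Sum>k\<in>UNIV. zc j i k x * d' x (ez j i k)) = zc j i 1 x * d' x (ez j i 1) + zc j i 2 x * d' x (ez j i 2)"
      by (simp add: sum_2)
    moreover have "C j i x = (tc j x * (w x * (h x * (dd (ez j i 1) x (ez j i 2) + 2 * (zc j i 2 x * dd (et j) x (ez j i 2) + d' x (et j))) + ((- (p * \<theta>) - 1) * d x powr (- (p * \<theta>) - 1 - 1)) * d' x (ez j i 2) * P1 j i x) + ph (u x) * u' x (ez j i 2) * (h x * P1 j i x)))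
          - 2 * (zc j i 1 x * (tc j x * (w x * (h x * (dd (ez j i 1) x (et j) + 2 * (zc j i 2 x * dd (et j) x (et j))) + ((- (p * \<theta>) - 1) * d x powr (- (p * \<theta>) - 1 - 1)) * d' x (et j) * P1 j i x) + ph (u x) * u' x (et j) * (h x * P1 j i x)) + w x * (h x * P1 j i x)))
          - (tc j x * (w x * (h x * (dd (ez j i 2) x (ez j i 1) - 2 * (zc j i 1 x * dd (et j) x (ez j i 1) + d' x (et j))) + ((- (p * \<theta>) - 1) * d x powr (- (p * \<theta>) - 1 - 1)) * d' x (ez j i 1) * P2 j i x) + ph (u x) * u' x (ez j i 1) * (h x * P2 j i x)))
          - 2 * (zc j i 2 x * (tc j x * (w x * (h x * (dd (ez j i 2) x (et j) - 2 * (zc j i 1 x * dd (et j) x (et j))) + ((- (p * \<theta>) - 1) * d x powr (- (p * \<theta>) - 1 - 1)) * d' x (et j) * P2 j i x) + ph (u x) * u' x (et j) * (h x * P2 j i x)) + w x * (h x * P2 j i x)))"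
      using xS unfolding C_def G1a_def G1b_def G2a_def G2b_def hd_def wd_def by simp
    ultimately show ?thesis using key[OF xS, of j i] Gaexp[OF xS] by simp
  qed
  have Rpt: "\<bar>u x\<bar> powr (p - 2) * u x / d x powr (p * \<theta> - 1) * (hgrad u x \<bullet> Zd p \<theta> d x)
      = (real CARD('n) + 1) / real CARD('n) * (\<Sum>j\<in>UNIV. \<Sum>i\<in>UNIV. \<Sum>k\<in>UNIV. Ga j i k x)
        - p * \<theta> / (2 * real CARD('n)) * (\<Sum>j\<in>UNIV. \<Sum>i\<in>UNIV. C j i x) - (Q - p * \<theta>) * W x" for x
  proof (cases "x \<in> S")
    case False
    then show ?thesis using u0[OF False]
      by (simp add: Ga_def C_def G1a_def G1b_def G2a_def G2b_def W_def)
  next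
    case xS: True
    have ip: "hgrad u x \<bullet> Zd p \<theta> d x = (\<Sum>j\<in>UNIV. \<Sum>i\<in>UNIV.
        u' x (hfield j i 1 x) * (Zd p \<theta> d x $ j $ i $ 1) + u' x (hfield j i 2 x) * (Zd p \<theta> d x $ j $ i $ 2))"
      by (simp add: inner_vec_def sum_2 hgrad_def u'_def)
    have Dh1: "d' x (hfield j i 1 x) = P1 j i x" for j i
      using lind[OF xS] by (simp add: hfield1 P1_def linear_add linear_scale)
    have Dh2: "d' x (hfield j i 2 x) = P2 j i x" for j i
      using lind[OF xS] by (simp add: hfield2 P2_def linear_diff linear_scale)
    have Uh1: "u' x (hfield j i 1 x) = u' x (ez j i 1) + 2 * zc j i 2 x * u' x (et j)" for j i
      using linu[OF xS] by (simp add: hfield1 linear_add linear_scale)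
    have Uh2: "u' x (hfield j i 2 x) = u' x (ez j i 2) + - 2 * zc j i 1 x * u' x (et j)" for j i
      using linu[OF xS] by (simp add: hfield2 linear_diff linear_scale)
    have Z1: "Zd p \<theta> d x $ j $ i $ 1 = (real CARD('n) + 1) / real CARD('n) / d x * zc j i 1 x - p * \<theta> / (2 * real CARD('n)) / (d x)\<^sup>2 * (tc j x * - P2 j i x)" for j i
    proof -
      have "Zd p \<theta> d x $ j $ i $ 1 = (real CARD('n) + 1) / real CARD('n) / d x * zc j i 1 x - p * \<theta> / (2 * real CARD('n)) / (d x)\<^sup>2 *
          (\<Sum>j'\<in>UNIV. tc j' x * (if j = j' then - d' x (hfield j i 2 x) else 0))"
        by (simp add: Zd_def hperp_def hgrad_def d'_def zc_def tc_def cong: if_cong)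
      then show ?thesis by (simp add: sum_if_mult Dh2)
    qed
    have Z2: "Zd p \<theta> d x $ j $ i $ 2 = (real CARD('n) + 1) / real CARD('n) / d x * zc j i 2 x - p * \<theta> / (2 * real CARD('n)) / (d x)\<^sup>2 * (tc j x * P1 j i x)" for j i
    proof -
      have "Zd p \<theta> d x $ j $ i $ 2 = (real CARD('n) + 1) / real CARD('n) / d x * zc j i 2 x - p * \<theta> / (2 * real CARD('n)) / (d x)\<^sup>2 *
          (\<Sum>j'\<in>UNIV. tc j' x * (if j = j' then d' x (hfield j i 1 x) else 0))"
        by (simp add: Zd_def hperp_def hgrad_def d'_def zc_def tc_def cong: if_cong)
      then show ?thesis by (simp add: sum_if_mult Dh1)
    qed
    have fac: "\<bar>u x\<bar> powr (p - 2) * u x / d x powr (p * \<theta> - 1) = h x * (d x)\<^sup>2 * ph (u x)"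
    proof -
      have "h x * (d x)\<^sup>2 = d x powr (- (p * \<theta>) - 1 + 1 + 1)"
        using powr_plus1[OF dpos[OF xS], of "- (p * \<theta>) - 1"] powr_plus1[OF dpos[OF xS], of "- (p * \<theta>) - 1 + 1"]
        unfolding h_def by (simp add: power2_eq_square mult.assoc)
      also have "\<dots> = 1 / d x powr (p * \<theta> - 1)"
        using powr_minus_divide[of "d x" "p * \<theta> - 1"] by simp
      finally show ?thesis unfolding ph_def by simp
    qed
    define SBd where "SBd = (\<Sum>j\<in>UNIV. tc j x * d' x (et j))"
    define SAd where "SAd = (\<Sum>j\<in>UNIV. \<Sum>i\<in>UNIV. \<Sum>k\<in>UNIV. zc j i k x * d' x (ez j i k))"
    have e3: "SAd + 2 * SBd = d x" unfolding SAd_def SBd_def by (rule eA[OF xS])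
    have sl: "(\<Sum>j\<in>UNIV. \<Sum>i\<in>(UNIV::'n set). tc j x * d' x (et j)) = real CARD('n) * SBd"
      unfolding SBd_def by (simp add: sum_distrib_left)
    have "\<bar>u x\<bar> powr (p - 2) * u x / d x powr (p * \<theta> - 1) * (hgrad u x \<bullet> Zd p \<theta> d x)
      = (\<Sum>j\<in>UNIV. \<Sum>i\<in>UNIV. (real CARD('n) + 1) / real CARD('n) * (\<Sum>k\<in>UNIV. Ga j i k x) - p * \<theta> / (2 * real CARD('n)) * C j i x
       + (p * \<theta> * w x * h x) * (\<Sum>k\<in>UNIV. zc j i k x * d' x (ez j i k))
       + (2 * (p * \<theta>) / real CARD('n) * w x * h x) * (tc j x * d' x (et j))
       - 2 * ((real CARD('n) + 1) / real CARD('n)) * g x * w x)"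
      unfolding fac ip Uh1 Uh2 Z1 Z2 key2[OF xS, symmetric] by (simp add: sum_distrib_left)
    also have "\<dots> = (real CARD('n) + 1) / real CARD('n) * (\<Sum>j\<in>UNIV. \<Sum>i\<in>UNIV. \<Sum>k\<in>UNIV. Ga j i k x)
        - p * \<theta> / (2 * real CARD('n)) * (\<Sum>j\<in>UNIV. \<Sum>i\<in>UNIV. C j i x)
        + (p * \<theta> * w x * h x) * SAd + (2 * (p * \<theta>) / real CARD('n) * w x * h x) * (real CARD('n) * SBd)
        - real (CARD('N) * CARD('n)) * (2 * ((real CARD('n) + 1) / real CARD('n)) * g x * w x)"
      unfolding sum2_affine SAd_def sl by simp
    also have "\<dots> = (real CARD('n) + 1) / real CARD('n) * (\<Sum>j\<in>UNIV. \<Sum>i\<in>UNIV. \<Sum>k\<in>UNIV. Ga j i k x)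
        - p * \<theta> / (2 * real CARD('n)) * (\<Sum>j\<in>UNIV. \<Sum>i\<in>UNIV. C j i x) - (Q - p * \<theta>) * W x"
    proof -
      have sa: "SAd = d x - 2 * SBd" using e3 by simp
      have gg: "g x = h x * d x" using hg[OF xS] by simp
      have np: "real CARD('n) > 0" by simp
      show ?thesis unfolding sa gg Q_def W_def using xS np by (simp add: field_simps)
    qed
    finally show ?thesis .
  qed
  define A where "A x = (\<Sum>j\<in>UNIV. \<Sum>i\<in>UNIV. \<Sum>k\<in>UNIV. Ga j i k x)" for x
  define B where "B x = (\<Sum>j\<in>UNIV. Gb j x)" for x
  define CC where "CC x = (\<Sum>j\<in>UNIV. \<Sum>i\<in>UNIV. C j i x)" for x
  have iA: "integrable lborel A" and zA: "integral\<^sup>L lborel A = 0"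
  proof -
    have "integrable lborel (\<lambda>x. Ga j i k x)" for j i k using Ga[of j i k] by simp
    then show "integrable lborel A" unfolding A_def by (intro Bochner_Integration.integrable_sum) auto
    have "integral\<^sup>L lborel (\<lambda>x. \<Sum>k\<in>UNIV. Ga j i k x) = 0" for j i
      using Ga by (simp add: Bochner_Integration.integral_sum)
    moreover have "integrable lborel (\<lambda>x. \<Sum>k\<in>UNIV. Ga j i k x)" for j i
      using Ga by (intro Bochner_Integration.integrable_sum) auto
    moreover have "integrable lborel (\<lambda>x. \<Sum>i\<in>UNIV. \<Sum>k\<in>UNIV. Ga j i k x)" for j
      using Ga by (intro Bochner_Integration.integrable_sum) auto
    ultimately show "integral\<^sup>L lborel A = 0" unfolding A_def by (simp add: Bochner_Integration.integral_sum)
  qed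
  have iB: "integrable lborel B" and zB: "integral\<^sup>L lborel B = 0"
  proof -
    have "integrable lborel (\<lambda>x. Gb j x)" for j using Gb[of j] by simp
    then show "integrable lborel B" unfolding B_def by (intro Bochner_Integration.integrable_sum) auto
    show "integral\<^sup>L lborel B = 0" unfolding B_def using Gb by (simp add: Bochner_Integration.integral_sum)
  qed
  have iC: "integrable lborel (C j i)" and zC: "integral\<^sup>L lborel (C j i) = 0" for j i
  proof -
    have i1: "integrable lborel (\<lambda>x. G1a j i x)" "integrable lborel (\<lambda>x. G1b j i x)"
      "integrable lborel (\<lambda>x. G2a j i x)" "integrable lborel (\<lambda>x. G2b j i x)"
      using G1a[of j i] G1b[of j i] G2a[of j i] G2b[of j i] by simp_all
    show "integrable lborel (C j i)" unfolding C_def[abs_def] using i1 by simp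
    show "integral\<^sup>L lborel (C j i) = 0" unfolding C_def[abs_def]
      using i1 G1a[of j i] G1b[of j i] G2a[of j i] G2b[of j i] by simp
  qed
  have iCC: "integrable lborel CC" and zCC: "integral\<^sup>L lborel CC = 0"
  proof -
    have "integrable lborel (\<lambda>x. C j i x)" for j i using iC[of j i] by simp
    then show "integrable lborel CC" unfolding CC_def by (intro Bochner_Integration.integrable_sum) auto
    have "integral\<^sup>L lborel (\<lambda>x. \<Sum>i\<in>UNIV. C j i x) = 0" for j
      using iC zC by (simp add: Bochner_Integration.integral_sum)
    moreover have "integrable lborel (\<lambda>x. \<Sum>i\<in>UNIV. C j i x)" for j
      using iC by (intro Bochner_Integration.integrable_sum) auto
    ultimately show "integral\<^sup>L lborel CC = 0" unfolding CC_def by (simp add: Bochner_Integration.integral_sum)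
  qed
  have "(\<integral>x. \<bar>u x\<bar> powr (p - 2) * u x * euler_op u x / d x powr (p * \<theta>) \<partial>lborel)
      = (\<integral>x. A x + 2 * B x - (Q - p * \<theta>) * W x \<partial>lborel)"
    unfolding A_def B_def Lpt by simp
  also have "\<dots> = - (Q - p * \<theta>) * integral\<^sup>L lborel W"
    using iA iB Wi zA zB by (simp add: algebra_simps)
  also have "\<dots> = (\<integral>x. (real CARD('n) + 1) / real CARD('n) * A x - p * \<theta> / (2 * real CARD('n)) * CC x - (Q - p * \<theta>) * W x \<partial>lborel)"
    using iA iCC Wi zA zCC by (simp add: algebra_simps)
  also have "\<dots> = (\<integral>x. \<bar>u x\<bar> powr (p - 2) * u x / d x powr (p * \<theta> - 1) * (hgrad u x \<bullet> Zd p \<theta> d x) \<partial>lborel)"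
    unfolding A_def CC_def Rpt by simp
  finally show ?thesis .
qed

end
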